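(* Assume (A1) and let $\alpha\in\mathbb R$. Let $\mathsf M$ be a convex subset of $\mathcal M_1(\mathsf T)$ and let $\zeta_1,\zeta_2\in\mathsf M$ satisfy $\Psi_\alpha(\zeta_1)=\Psi_\alpha(\zeta_2)=\inf_{\zeta\in\mathsf M}\Psi_\alpha(\zeta)<\infty$. Then $\zeta_1K=\zeta_2K$.
   Context: Let $(\mathsf Y,\mathcal Y,\nu)$ be a measure space with $\nu$ $\sigma$-finite, $(\mathsf T,\mathcal T)$ a measurable space and $\mathcal M_1(\mathsf T)$ its probability measures. Let $k:\mathsf T\times\mathsf Y\to[0,\infty)$ be measurable with $\int k(\theta,y)\nu(dy)=1$, $K(\theta,A)=\int_Ak(\theta,y)\nu(dy)$, $\zeta K(A)=\int\zeta(d\theta)K(\theta,A)$, and $\zeta k(y)=\int\zeta(d\theta)k(\theta,y)$. Let $p$ be measurable positive on $\mathsf Y$. $f_0(u)=u-1-\log u$, $f_1(u)=1-u+u\log u$, $f_\alpha(u)=\frac{1}{\alpha(\alpha-1)}[u^\alpha-1-\alpha(u-1)]$ otherwise; $\Psi_\alpha(\zeta)=\int_{\mathsf Y}f_\alpha(\zeta k(y)/p(y))p(y)\nu(dy)$. Assumption (A1): $k>0$, $p>0$ everywhere and $\int p\,d\nu<\infty$. *)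

theory Defs
  imports "HOL-Probability.Probability"
begin

definition prob_measures :: "'t measure \<Rightarrow> 't measure set" where
  "prob_measures MT = space (prob_algebra MT)"

definition mix_measure :: "'t measure \<Rightarrow> real \<Rightarrow> 't measure \<Rightarrow> 't measure \<Rightarrow> 't measure" where
  "mix_measure MT t z1 z2 =
     measure_of (space MT) (sets MT)
       (\<lambda>A. ennreal t * emeasure z1 A + ennreal (1 - t) * emeasure z2 A)"

definition convex_measure_set :: "'t measure \<Rightarrow> 't measure set \<Rightarrow> bool" where
  "convex_measure_set MT M \<longleftrightarrow>
     (\<forall>z1\<in>M. \<forall>z2\<in>M. \<forall>t::real. 0 \<le> t \<and> t \<le> 1 \<longrightarrow> mix_measure MT t z1 z2 \<in> M)"

definition kernelK :: "'y measure \<Rightarrow> ('t \<Rightarrow> 'y \<Rightarrow> real) \<Rightarrow> 't \<Rightarrow> 'y set \<Rightarrow> ennreal" where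
  "kernelK nu k \<theta> A = (\<integral>\<^sup>+ y\<in>A. ennreal (k \<theta> y) \<partial>nu)"

definition mixK :: "'y measure \<Rightarrow> ('t \<Rightarrow> 'y \<Rightarrow> real) \<Rightarrow> 't measure \<Rightarrow> 'y set \<Rightarrow> ennreal" where
  "mixK nu k \<zeta> A = (\<integral>\<^sup>+ \<theta>. kernelK nu k \<theta> A \<partial>\<zeta>)"

definition mixk :: "('t \<Rightarrow> 'y \<Rightarrow> real) \<Rightarrow> 't measure \<Rightarrow> 'y \<Rightarrow> real" where
  "mixk k \<zeta> y = (\<integral> \<theta>. k \<theta> y \<partial>\<zeta>)"

definition f_alpha :: "real \<Rightarrow> real \<Rightarrow> real" where
  "f_alpha \<alpha> u =
     (if \<alpha> = 0 then u - 1 - ln u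
      else if \<alpha> = 1 then 1 - u + u * ln u
      else (1 / (\<alpha> * (\<alpha> - 1))) * (u powr \<alpha> - 1 - \<alpha> * (u - 1)))"

definition Psi :: "'y measure \<Rightarrow> ('t \<Rightarrow> 'y \<Rightarrow> real) \<Rightarrow> ('y \<Rightarrow> real) \<Rightarrow> real \<Rightarrow> 't measure \<Rightarrow> ennreal" where
  "Psi nu k p \<alpha> \<zeta> = (\<integral>\<^sup>+ y. ennreal (f_alpha \<alpha> (mixk k \<zeta> y / p y) * p y) \<partial>nu)"

end

theory Submission
  imports Defs
begin

lemma convex_gen:
  fixes F F' :: "real \<Rightarrow> real"
  assumes der: "\<And>x. 0 < x \<Longrightarrow> (F has_real_derivative F' x) (at x)"
    and mono: "\<And>x y. 0 < x \<Longrightarrow> x < y \<Longrightarrow> F' x < F' y"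
  shows "\<And>u v. 0 < u \<Longrightarrow> u < v \<Longrightarrow> 2 * F ((u+v)/2) < F u + F v"
proof -
  fix u v :: real assume u: "0 < u" and uv: "u < v"
  define m where "m = (u+v)/2"
  have um: "u < m" and mv: "m < v" using uv by (auto simp: m_def)
  obtain a where a: "u < a" "a < m" "F m - F u = (m - u) * F' a"
    using MVT2[OF um, of F F'] der u um by (metis less_le_trans order.strict_trans1)
  obtain b where b: "m < b" "b < v" "F v - F m = (v - m) * F' b"
    using MVT2[OF mv, of F F'] der u um by (metis less_le_trans order.strict_trans1 less_trans)
  have "F' a < F' m" using mono a u by auto
  moreover have "F' m < F' b" using mono b u um by auto
  moreover have "m - u = v - m" unfolding m_def by (simp add: field_simps)
  ultimately have "F m - F u < F v - F m" using a b um mv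
    by (metis mult_strict_left_mono diff_gt_0_iff_gt less_trans)
  then show "2 * F ((u+v)/2) < F u + F v" by (simp add: m_def)
qed

lemma nonneg_gen:
  fixes F F' :: "real \<Rightarrow> real"
  assumes der: "\<And>x. 0 < x \<Longrightarrow> (F has_real_derivative F' x) (at x)"
    and mono: "\<And>x y. 0 < x \<Longrightarrow> x < y \<Longrightarrow> F' x < F' y"
    and F1: "F 1 = 0" and F'1: "F' 1 = 0"
  shows "\<And>u. 0 < u \<Longrightarrow> F u \<ge> 0"
proof -
  fix u :: real assume u: "0 < u"
  consider "u < 1" | "u = 1" | "u > 1" by linarith
  then show "F u \<ge> 0"
  proof cases
    case 1
    obtain a where a: "u < a" "a < 1" "F 1 - F u = (1 - u) * F' a"
      using MVT2[OF 1, of F F'] der u by (metis less_le_trans order.strict_trans1)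
    have "F' a < 0" using mono[of a 1] a u F'1 by auto
    then show ?thesis using a 1 F1 by (smt (verit) mult_pos_neg)
  next
    case 2 then show ?thesis using F1 by simp
  next
    case 3
    obtain a where a: "1 < a" "a < u" "F u - F 1 = (u - 1) * F' a"
      using MVT2[OF 3, of F F'] der by (metis less_le_trans zero_less_one order.strict_trans1)
    have "F' a > 0" using mono[of 1 a] a F'1 by auto
    then show ?thesis using a 3 F1 by (smt (verit) mult_pos_pos)
  qed
qed

definition fd :: "real \<Rightarrow> real \<Rightarrow> real" where
  "fd \<alpha> u = (if \<alpha> = 0 then 1 - 1/u else if \<alpha> = 1 then ln u
      else (1 / (\<alpha> * (\<alpha> - 1))) * (\<alpha> * u powr (\<alpha> - 1) - \<alpha>))"

lemma f_der: "0 < x \<Longrightarrow> (f_alpha a has_real_derivative fd a x) (at x)"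
  unfolding f_alpha_def[abs_def] fd_def
  apply (cases "a = 0"; cases "a = 1")
     apply simp_all
    apply (auto intro!: derivative_eq_intros)
  done

lemma fd_mono: "0 < x \<Longrightarrow> x < y \<Longrightarrow> fd a x < fd a y"
proof -
  assume x: "0 < x" and xy: "x < y"
  show ?thesis
  proof (cases "a = 0 \<or> a = 1")
    case True then show ?thesis using x xy by (auto simp: fd_def frac_less2)
  next
    case False
    then have a0: "a \<noteq> 0" "a \<noteq> 1" by auto
    have eq: "\<And>z. fd a z = (z powr (a - 1) - 1) / (a - 1)"
      using a0 by (simp add: fd_def field_simps)
    show ?thesis
    proof (cases "a > 1")
      case True
      then have "x powr (a-1) < y powr (a-1)" using x xy by (intro powr_less_mono2) auto
      then show ?thesis using True by (simp add: eq divide_strict_right_mono)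
    next
      case False
      then have "a < 1" using a0 by auto
      then have "y powr (a-1) < x powr (a-1)" using x xy by (intro powr_less_mono2_neg) auto
      then show ?thesis using \<open>a < 1\<close> by (simp add: eq divide_strict_right_mono_neg)
    qed
  qed
qed

lemma f_nonneg: "0 < u \<Longrightarrow> f_alpha a u \<ge> 0"
  by (rule nonneg_gen[OF f_der fd_mono]) (auto simp: f_alpha_def fd_def)

lemma f_strict: "0 < u \<Longrightarrow> 0 < v \<Longrightarrow> u \<noteq> v \<Longrightarrow> 2 * f_alpha a ((u+v)/2) < f_alpha a u + f_alpha a v"
  using convex_gen[OF f_der fd_mono, of u v a] convex_gen[OF f_der fd_mono, of v u a]
  by (cases "u < v") (auto simp: add.commute)

lemma f_le: "0 < u \<Longrightarrow> 0 < v \<Longrightarrow> 2 * f_alpha a ((u+v)/2) \<le> f_alpha a u + f_alpha a v"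
  using f_strict[of u v a] by (cases "u = v") auto

lemma mix_emeasure:
  assumes s1: "sets z1 = sets MT" and s2: "sets z2 = sets MT" and A: "A \<in> sets MT"
  shows "emeasure (mix_measure MT t z1 z2) A = ennreal t * emeasure z1 A + ennreal (1 - t) * emeasure z2 A"
  unfolding mix_measure_def
proof (rule emeasure_measure_of_sigma[OF sets.sigma_algebra_axioms _ _ A])
  show "positive (sets MT) (\<lambda>A. ennreal t * emeasure z1 A + ennreal (1 - t) * emeasure z2 A)"
    by (simp add: positive_def)
  show "countably_additive (sets MT) (\<lambda>A. ennreal t * emeasure z1 A + ennreal (1 - t) * emeasure z2 A)"
    unfolding countably_additive_def
  proof (intro allI impI)
    fix B :: "nat \<Rightarrow> _" assume B: "range B \<subseteq> sets MT" "disjoint_family B" "\<Union> (range B) \<in> sets MT"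
    have "(\<Sum>i. ennreal t * emeasure z1 (B i) + ennreal (1 - t) * emeasure z2 (B i))
        = (\<Sum>i. ennreal t * emeasure z1 (B i)) + (\<Sum>i. ennreal (1 - t) * emeasure z2 (B i))"
      by (rule suminf_add[symmetric]) auto
    also have "\<dots> = ennreal t * emeasure z1 (\<Union> (range B)) + ennreal (1 - t) * emeasure z2 (\<Union> (range B))"
      using B s1 s2 by (simp add: suminf_emeasure)
    finally show "(\<Sum>i. ennreal t * emeasure z1 (B i) + ennreal (1 - t) * emeasure z2 (B i)) =
          ennreal t * emeasure z1 (\<Union> (range B)) + ennreal (1 - t) * emeasure z2 (\<Union> (range B))" .
  qed
qed

lemma mix_nn_integral:
  assumes s1: "sets z1 = sets MT" and s2: "sets z2 = sets MT" and f: "f \<in> borel_measurable MT"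
  shows "(\<integral>\<^sup>+x. f x \<partial>mix_measure MT t z1 z2) = ennreal t * (\<integral>\<^sup>+x. f x \<partial>z1) + ennreal (1 - t) * (\<integral>\<^sup>+x. f x \<partial>z2)"
  using f
proof induction
  case (cong f g)
  have sp: "space (mix_measure MT t z1 z2) = space MT" by (simp add: mix_measure_def)
  have "space z1 = space MT" "space z2 = space MT" using s1 s2 sets_eq_imp_space_eq by blast+
  then show ?case using cong
    by (simp add: sp cong: nn_integral_cong_simp)
next
  case (set A)
  have ss: "sets (mix_measure MT t z1 z2) = sets MT" by (simp add: mix_measure_def)
  show ?case using set s1 s2 ss by (simp add: mix_emeasure)
next
  case (mult f c)
  have ss: "sets (mix_measure MT t z1 z2) = sets MT" by (simp add: mix_measure_def)
  have m: "f \<in> borel_measurable (mix_measure MT t z1 z2)" "f \<in> borel_measurable z1"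
     "f \<in> borel_measurable z2"
    using mult by (simp_all add: measurable_cong_sets[OF ss refl] measurable_cong_sets[OF s1 refl] measurable_cong_sets[OF s2 refl])
  show ?case unfolding nn_integral_cmult[OF m(1)] nn_integral_cmult[OF m(2)] nn_integral_cmult[OF m(3)] mult(4)
    by (simp only: distrib_left ac_simps)
next
  case (add f g)
  have ss: "sets (mix_measure MT t z1 z2) = sets MT" by (simp add: mix_measure_def)
  have m: "f \<in> borel_measurable (mix_measure MT t z1 z2)" "f \<in> borel_measurable z1"
     "f \<in> borel_measurable z2" "g \<in> borel_measurable (mix_measure MT t z1 z2)" "g \<in> borel_measurable z1"
     "g \<in> borel_measurable z2"
    using add by (simp_all add: measurable_cong_sets[OF ss refl] measurable_cong_sets[OF s1 refl] measurable_cong_sets[OF s2 refl])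
  show ?case using add by (simp add: nn_integral_add m distrib_left ac_simps)
next
  case (seq U)
  have ss: "sets (mix_measure MT t z1 z2) = sets MT" by (simp add: mix_measure_def)
  have m: "\<And>i. U i \<in> borel_measurable (mix_measure MT t z1 z2)" "\<And>i. U i \<in> borel_measurable z1"
     "\<And>i. U i \<in> borel_measurable z2"
    using seq by (simp_all add: measurable_cong_sets[OF ss refl] measurable_cong_sets[OF s1 refl] measurable_cong_sets[OF s2 refl])
  have inc: "incseq U" using seq by simp
  have "(\<integral>\<^sup>+x. (SUP i. U i) x \<partial>mix_measure MT t z1 z2) = (SUP i. \<integral>\<^sup>+x. U i x \<partial>mix_measure MT t z1 z2)"
    using m seq by (simp add: nn_integral_monotone_convergence_SUP image_comp)
  also have "\<dots> = (SUP i. ennreal t * (\<integral>\<^sup>+x. U i x \<partial>z1) + ennreal (1 - t) * (\<integral>\<^sup>+x. U i x \<partial>z2))"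
    using seq by simp
  also have "\<dots> = (SUP i. ennreal t * (\<integral>\<^sup>+x. U i x \<partial>z1)) + (SUP i. ennreal (1 - t) * (\<integral>\<^sup>+x. U i x \<partial>z2))"
    by (rule ennreal_SUP_add) (auto intro!: mult_left_mono nn_integral_mono le_funD[OF incseqD[OF inc]] simp: incseq_def)
  also have "\<dots> = ennreal t * (SUP i. (\<integral>\<^sup>+x. U i x \<partial>z1)) + ennreal (1 - t) * (SUP i. (\<integral>\<^sup>+x. U i x \<partial>z2))"
    by (simp add: SUP_mult_left_ennreal)
  also have "\<dots> = ennreal t * (\<integral>\<^sup>+x. (SUP i. U i) x \<partial>z1) + ennreal (1 - t) * (\<integral>\<^sup>+x. (SUP i. U i) x \<partial>z2)"
    using m seq by (simp add: nn_integral_monotone_convergence_SUP image_comp)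
  finally show ?case .
qed

locale kset =
  fixes nu :: "'y measure" and MT :: "'t measure" and k :: "'t \<Rightarrow> 'y \<Rightarrow> real" and z :: "'t measure"
  assumes sf: "sigma_finite_measure nu"
    and k_meas: "(\<lambda>(\<theta>, y). k \<theta> y) \<in> borel_measurable (MT \<Otimes>\<^sub>M nu)"
    and k_pos: "\<And>\<theta> y. \<theta> \<in> space MT \<Longrightarrow> y \<in> space nu \<Longrightarrow> k \<theta> y > 0"
    and k_norm: "\<And>\<theta>. \<theta> \<in> space MT \<Longrightarrow> (\<integral>\<^sup>+ y. ennreal (k \<theta> y) \<partial>nu) = 1"
    and zp: "prob_space z" and zs: "sets z = sets MT"
begin

lemma psf: "pair_sigma_finite z nu"
  using sf zp unfolding pair_sigma_finite_def
  by (simp add: prob_space_imp_sigma_finite)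

lemma kz[measurable]: "(\<lambda>(\<theta>, y). k \<theta> y) \<in> borel_measurable (z \<Otimes>\<^sub>M nu)"
  using k_meas by (simp add: measurable_cong_sets[OF sets_pair_measure_cong[OF zs refl] refl])

lemma kz'[measurable]: "(\<lambda>(y, \<theta>). k \<theta> y) \<in> borel_measurable (nu \<Otimes>\<^sub>M z)"
  using kz measurable_pair_swap_iff[of "\<lambda>(\<theta>, y). k \<theta> y"] by simp

lemma spz: "space z = space MT" using zs sets_eq_imp_space_eq by blast

lemma Gm[measurable]: "(\<lambda>y. \<integral>\<^sup>+\<theta>. ennreal (k \<theta> y) \<partial>z) \<in> borel_measurable nu"
proof -
  interpret pair_sigma_finite z nu by (rule psf)
  show ?thesis by measurable
qed

lemma mm[measurable]: "mixk k z \<in> borel_measurable nu"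
proof -
  interpret sigma_finite_measure z using zp by (simp add: prob_space_imp_sigma_finite)
  show ?thesis unfolding mixk_def[abs_def] by (rule borel_measurable_lebesgue_integral) (rule kz')
qed

lemma mK: "mixK nu k z A = (\<integral>\<^sup>+y. (\<integral>\<^sup>+\<theta>. ennreal (k \<theta> y) \<partial>z) * indicator A y \<partial>nu)"
  if A: "A \<in> sets nu"
proof -
  interpret pair_sigma_finite z nu by (rule psf)
  have "mixK nu k z A = (\<integral>\<^sup>+\<theta>. \<integral>\<^sup>+y. ennreal (k \<theta> y) * indicator A y \<partial>nu \<partial>z)"
    unfolding mixK_def kernelK_def by simp
  also have "\<dots> = (\<integral>\<^sup>+y. \<integral>\<^sup>+\<theta>. ennreal (k \<theta> y) * indicator A y \<partial>z \<partial>nu)"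
    by (rule Fubini'[symmetric]) (use A in measurable)
  also have "\<dots> = (\<integral>\<^sup>+y. (\<integral>\<^sup>+\<theta>. ennreal (k \<theta> y) \<partial>z) * indicator A y \<partial>nu)"
    by (intro nn_integral_cong nn_integral_multc) measurable
  finally show ?thesis .
qed

lemma Gint: "(\<integral>\<^sup>+y. (\<integral>\<^sup>+\<theta>. ennreal (k \<theta> y) \<partial>z) \<partial>nu) = 1"
proof -
  interpret pair_sigma_finite z nu by (rule psf)
  interpret prob_space z by (rule zp)
  have "(\<integral>\<^sup>+y. (\<integral>\<^sup>+\<theta>. ennreal (k \<theta> y) \<partial>z) \<partial>nu) = (\<integral>\<^sup>+\<theta>. \<integral>\<^sup>+y. ennreal (k \<theta> y) \<partial>nu \<partial>z)"
    by (rule Fubini') measurable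
  also have "\<dots> = (\<integral>\<^sup>+\<theta>. 1 \<partial>z)"
    by (intro nn_integral_cong) (simp add: k_norm spz)
  finally show ?thesis by (simp add: emeasure_space_1)
qed

lemma ae: "AE y in nu. 0 < mixk k z y \<and> ennreal (mixk k z y) = (\<integral>\<^sup>+\<theta>. ennreal (k \<theta> y) \<partial>z)"
proof -
  interpret prob_space z by (rule zp)
  have "AE y in nu. (\<integral>\<^sup>+\<theta>. ennreal (k \<theta> y) \<partial>z) \<noteq> \<infinity>"
    by (rule nn_integral_noteq_infinite) (use Gint in auto)
  then show ?thesis
  proof (rule AE_mp, intro AE_I2 impI)
    fix y assume y: "y \<in> space nu" and fin: "(\<integral>\<^sup>+\<theta>. ennreal (k \<theta> y) \<partial>z) \<noteq> \<infinity>"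
    have km: "(\<lambda>\<theta>. k \<theta> y) \<in> borel_measurable z" using y by measurable
    have int: "integrable z (\<lambda>\<theta>. k \<theta> y)"
    proof (rule integrableI_bounded[OF km])
      have "(\<integral>\<^sup>+\<theta>. ennreal (norm (k \<theta> y)) \<partial>z) = (\<integral>\<^sup>+\<theta>. ennreal (k \<theta> y) \<partial>z)"
        using k_pos y by (intro nn_integral_cong) (auto simp: spz less_imp_le)
      then show "(\<integral>\<^sup>+\<theta>. ennreal (norm (k \<theta> y)) \<partial>z) < \<infinity>" using fin by (simp add: less_top)
    qed
    have eq: "(\<integral>\<^sup>+\<theta>. ennreal (k \<theta> y) \<partial>z) = ennreal (mixk k z y)"
      unfolding mixk_def
      by (rule nn_integral_eq_integral[OF int]) (use k_pos y in \<open>auto simp: spz less_imp_le\<close>)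
    have nn: "0 \<le> mixk k z y" unfolding mixk_def
      by (rule integral_nonneg_AE) (use k_pos y in \<open>auto simp: spz less_imp_le\<close>)
    have "mixk k z y \<noteq> 0"
    proof
      assume "mixk k z y = 0"
      then have "(\<integral>\<^sup>+\<theta>. ennreal (k \<theta> y) \<partial>z) = 0" using eq by simp
      then have "AE \<theta> in z. ennreal (k \<theta> y) = 0" using km by (simp add: nn_integral_0_iff_AE)
      moreover have "AE \<theta> in z. ennreal (k \<theta> y) \<noteq> 0" using k_pos y by (intro AE_I2) (force simp: spz ennreal_eq_0_iff)
      ultimately have "AE \<theta> in z. False" by eventually_elim auto
      then show False by simp
    qed
    then show "0 < mixk k z y \<and> ennreal (mixk k z y) = (\<integral>\<^sup>+\<theta>. ennreal (k \<theta> y) \<partial>z)"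
      using nn eq by simp
  qed
qed

end

lemma f_meas[measurable (raw)]:
  assumes g[measurable]: "g \<in> borel_measurable M"
  shows "(\<lambda>x. f_alpha a (g x)) \<in> borel_measurable M"
  unfolding f_alpha_def by (cases "a = 0"; cases "a = 1"; simp; measurable)

lemma enn_cancel:
  fixes I a b :: ennreal
  assumes "2*I = 2*a + b" "I \<le> a" "I < \<top>"
  shows "b = 0"
proof -
  have "2*a + b \<le> 2*a" using assms by (metis add_mono mult_2)
  moreover have "2*a < \<top>" using assms by (metis ennreal_add_less_top mult_2)
  ultimately show ?thesis by auto
qed

theorem mainTheorem5:
  fixes nu :: "'y measure" and MT :: "'t measure"
    and k :: "'t \<Rightarrow> 'y \<Rightarrow> real" and p :: "'y \<Rightarrow> real" and \<alpha> :: real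
    and M :: "'t measure set" and \<zeta>1 \<zeta>2 :: "'t measure"
  assumes sf: "sigma_finite_measure nu"
    and k_meas: "(\<lambda>(\<theta>, y). k \<theta> y) \<in> borel_measurable (MT \<Otimes>\<^sub>M nu)"
    and k_pos: "\<And>\<theta> y. \<theta> \<in> space MT \<Longrightarrow> y \<in> space nu \<Longrightarrow> k \<theta> y > 0"
    and k_norm: "\<And>\<theta>. \<theta> \<in> space MT \<Longrightarrow> (\<integral>\<^sup>+ y. ennreal (k \<theta> y) \<partial>nu) = 1"
    and p_meas: "p \<in> borel_measurable nu"
    and p_pos: "\<And>y. y \<in> space nu \<Longrightarrow> p y > 0"
    and p_int: "(\<integral>\<^sup>+ y. ennreal (p y) \<partial>nu) < \<infinity>"
    and M_sub: "M \<subseteq> prob_measures MT"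
    and M_conv: "convex_measure_set MT M"
    and z1: "\<zeta>1 \<in> M" and z2: "\<zeta>2 \<in> M"
    and opt1: "Psi nu k p \<alpha> \<zeta>1 = (INF \<zeta>\<in>M. Psi nu k p \<alpha> \<zeta>)"
    and opt2: "Psi nu k p \<alpha> \<zeta>2 = (INF \<zeta>\<in>M. Psi nu k p \<alpha> \<zeta>)"
    and fin: "(INF \<zeta>\<in>M. Psi nu k p \<alpha> \<zeta>) < \<infinity>"
  shows "\<forall>A\<in>sets nu. mixK nu k \<zeta>1 A = mixK nu k \<zeta>2 A"
proof -
  note p_meas[measurable]
  have zp1: "prob_space \<zeta>1" "sets \<zeta>1 = sets MT" using M_sub z1
    by (auto simp: prob_measures_def space_prob_algebra)
  have zp2: "prob_space \<zeta>2" "sets \<zeta>2 = sets MT" using M_sub z2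
    by (auto simp: prob_measures_def space_prob_algebra)
  define \<zeta> where "\<zeta> = mix_measure MT (1/2) \<zeta>1 \<zeta>2"
  have zM: "\<zeta> \<in> M" using M_conv z1 z2 by (simp add: convex_measure_set_def \<zeta>_def)
  have zp: "prob_space \<zeta>" "sets \<zeta> = sets MT" using M_sub zM
    by (auto simp: prob_measures_def space_prob_algebra)
  interpret K1: kset nu MT k \<zeta>1 by (rule kset.intro[OF sf k_meas k_pos k_norm zp1])
  interpret K2: kset nu MT k \<zeta>2 by (rule kset.intro[OF sf k_meas k_pos k_norm zp2])
  interpret K: kset nu MT k \<zeta> by (rule kset.intro[OF sf k_meas k_pos k_norm zp])
  define I where "I = (INF \<zeta>\<in>M. Psi nu k p \<alpha> \<zeta>)"
  have Ile: "I \<le> Psi nu k p \<alpha> \<zeta>" using zM by (simp add: I_def INF_lower)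
  define g1 where "g1 = mixk k \<zeta>1"
  define g2 where "g2 = mixk k \<zeta>2"
  define h where "h = mixk k \<zeta>"
  have [measurable]: "g1 \<in> borel_measurable nu" "g2 \<in> borel_measurable nu" "h \<in> borel_measurable nu"
    unfolding g1_def g2_def h_def by (rule K1.mm K2.mm K.mm)+
  have Gmix: "(\<integral>\<^sup>+\<theta>. ennreal (k \<theta> y) \<partial>\<zeta>) = ennreal (1/2) * (\<integral>\<^sup>+\<theta>. ennreal (k \<theta> y) \<partial>\<zeta>1)
      + ennreal (1/2) * (\<integral>\<^sup>+\<theta>. ennreal (k \<theta> y) \<partial>\<zeta>2)" if y: "y \<in> space nu" for y
  proof -
    have "(\<lambda>\<theta>. ennreal (k \<theta> y)) \<in> borel_measurable MT" using y k_meas by measurable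
    from mix_nn_integral[OF zp1(2) zp2(2) this, of "1/2"] show ?thesis
      by (simp add: \<zeta>_def)
  qed
  have AEh: "AE y in nu. 0 < g1 y \<and> 0 < g2 y \<and> h y = (g1 y + g2 y) / 2"
    using K1.ae K2.ae K.ae AE_space
  proof eventually_elim
    case (elim y)
    have pos: "0 < g1 y" "0 < g2 y" "0 < h y" using elim by (simp_all add: g1_def g2_def h_def)
    have "ennreal (h y) = ennreal (1/2) * ennreal (g1 y) + ennreal (1/2) * ennreal (g2 y)"
      using Gmix[OF elim(4)] elim by (simp add: g1_def g2_def h_def)
    also have "\<dots> = ennreal (1/2 * g1 y) + ennreal (1/2 * g2 y)"
      using pos by (subst (1 2) ennreal_mult[symmetric]) auto
    also have "\<dots> = ennreal (1/2 * g1 y + 1/2 * g2 y)"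
      using pos by (intro ennreal_plus[symmetric]) auto
    finally have "h y = 1/2 * g1 y + 1/2 * g2 y"
      using pos by (subst (asm) ennreal_inj) auto
    then have "h y = (g1 y + g2 y) / 2" by simp
    then show ?case using pos by simp
  qed
  define \<Phi> where "\<Phi> g y = f_alpha \<alpha> (g y / p y) * p y" for g :: "'y \<Rightarrow> real" and y
  define D where "D y = \<Phi> g1 y + \<Phi> g2 y - 2 * \<Phi> h y" for y
  have [measurable]: "\<Phi> g \<in> borel_measurable nu" if [measurable]: "g \<in> borel_measurable nu" for g
    unfolding \<Phi>_def[abs_def] by measurable
  have [measurable]: "D \<in> borel_measurable nu" unfolding D_def[abs_def] by measurable
  have AEd: "AE y in nu. 0 \<le> \<Phi> g1 y \<and> 0 \<le> \<Phi> g2 y \<and> 0 \<le> \<Phi> h y \<and> 0 \<le> D y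
      \<and> (D y \<le> 0 \<longrightarrow> g1 y = g2 y)"
    using AEh AE_space
  proof eventually_elim
    case (elim y)
    have py: "0 < p y" using p_pos elim by simp
    define u where "u = g1 y / p y"
    define v where "v = g2 y / p y"
    have u: "0 < u" and v: "0 < v" using elim py by (auto simp: u_def v_def)
    have hm: "h y / p y = (u + v) / 2" using elim by (simp add: u_def v_def add_divide_distrib)
    have P: "\<Phi> g1 y = f_alpha \<alpha> u * p y" "\<Phi> g2 y = f_alpha \<alpha> v * p y"
      "\<Phi> h y = f_alpha \<alpha> ((u+v)/2) * p y"
      by (simp_all add: \<Phi>_def u_def v_def hm)
    have "0 < (u + v) / 2" using u v by simp
    note fn = f_nonneg[OF u, of \<alpha>] f_nonneg[OF v, of \<alpha>] f_nonneg[OF this, of \<alpha>]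
    have le: "2 * f_alpha \<alpha> ((u+v)/2) \<le> f_alpha \<alpha> u + f_alpha \<alpha> v" by (rule f_le[OF u v])
    have Dy: "D y = (f_alpha \<alpha> u + f_alpha \<alpha> v - 2 * f_alpha \<alpha> ((u+v)/2)) * p y"
      by (simp add: D_def P algebra_simps)
    have "D y \<le> 0 \<longrightarrow> g1 y = g2 y"
    proof
      assume "D y \<le> 0"
      then have "f_alpha \<alpha> u + f_alpha \<alpha> v - 2 * f_alpha \<alpha> ((u+v)/2) \<le> 0"
        using py by (simp add: Dy mult_le_0_iff)
      then have "u = v" using f_strict[OF u v, of \<alpha>] by (cases "u = v") auto
      then show "g1 y = g2 y" using py by (simp add: u_def v_def)
    qed
    then show ?case using fn py le by (simp add: P Dy)
  qed
  have Ps: "Psi nu k p \<alpha> z = (\<integral>\<^sup>+y. ennreal (\<Phi> (mixk k z) y) \<partial>nu)" for z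
    by (simp add: Psi_def \<Phi>_def)
  have "2 * I = Psi nu k p \<alpha> \<zeta>1 + Psi nu k p \<alpha> \<zeta>2"
    using opt1 opt2 by (simp add: I_def mult_2)
  also have "\<dots> = (\<integral>\<^sup>+y. ennreal (\<Phi> g1 y) + ennreal (\<Phi> g2 y) \<partial>nu)"
    unfolding Ps g1_def[symmetric] g2_def[symmetric] by (rule nn_integral_add[symmetric]) auto
  also have "\<dots> = (\<integral>\<^sup>+y. ennreal 2 * ennreal (\<Phi> h y) + ennreal (D y) \<partial>nu)"
  proof (rule nn_integral_cong_AE)
    show "AE y in nu. ennreal (\<Phi> g1 y) + ennreal (\<Phi> g2 y) = ennreal 2 * ennreal (\<Phi> h y) + ennreal (D y)"
      using AEd
    proof eventually_elim
      case (elim y)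
      have "ennreal (\<Phi> g1 y) + ennreal (\<Phi> g2 y) = ennreal (\<Phi> g1 y + \<Phi> g2 y)"
        by (intro ennreal_plus[symmetric]) (use elim in auto)
      also have "\<Phi> g1 y + \<Phi> g2 y = 2 * \<Phi> h y + D y" by (simp add: D_def)
      also have "ennreal (2 * \<Phi> h y + D y) = ennreal (2 * \<Phi> h y) + ennreal (D y)"
        by (intro ennreal_plus) (use elim in auto)
      also have "ennreal (2 * \<Phi> h y) = ennreal 2 * ennreal (\<Phi> h y)"
        by (intro ennreal_mult) (use elim in auto)
      finally show ?case .
    qed
  qed
  also have "\<dots> = 2 * Psi nu k p \<alpha> \<zeta> + (\<integral>\<^sup>+y. ennreal (D y) \<partial>nu)"
    by (subst nn_integral_add) (auto simp: nn_integral_cmult Ps h_def)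
  finally have "(\<integral>\<^sup>+y. ennreal (D y) \<partial>nu) = 0"
    by (rule enn_cancel[OF _ Ile]) (use fin in \<open>simp add: I_def\<close>)
  then have "AE y in nu. ennreal (D y) = 0" by (subst (asm) nn_integral_0_iff_AE) auto
  then have AEg: "AE y in nu. g1 y = g2 y" using AEd by eventually_elim auto
  have AEG: "AE y in nu. (\<integral>\<^sup>+\<theta>. ennreal (k \<theta> y) \<partial>\<zeta>1) = (\<integral>\<^sup>+\<theta>. ennreal (k \<theta> y) \<partial>\<zeta>2)"
    using AEg K1.ae K2.ae by eventually_elim (simp add: g1_def g2_def)
  show ?thesis
  proof
    fix A assume A: "A \<in> sets nu"
    show "mixK nu k \<zeta>1 A = mixK nu k \<zeta>2 A"
      unfolding K1.mK[OF A] K2.mK[OF A]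
      by (rule nn_integral_cong_AE) (use AEG in eventually_elim, simp)
  qed
qed

end
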